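(* Fix $c\in\mathcal{C}'$ with $\mathcal{S}(c)\setminus\{c\}\neq\emptyset$ and fix the values of all messages other than the block $\boldsymbol\lambda_{c,\mathcal{S}(c)}=(\lambda_{c\to s}(\mathbf{x}_s))_{s\in\mathcal{S}(c)\setminus\{c\}}$. For an arbitrary choice of this block, let $(b_c,(b_s)_{s\in\mathcal{S}(c)\setminus\{c\}})$ be the resulting beliefs, and let $(b^*_c,(b^*_s)_{s\in\mathcal{S}(c)\setminus\{c\}})$ be the beliefs obtained when the block is replaced by $\boldsymbol\lambda^*_{c,\mathcal{S}(c)}$. Then $$b^*_s(\mathbf{x}_s)=\frac{1}{|\mathcal{S}(c)\setminus\{c\}|}\max_{\mathbf{x}_{c\setminus s}}\Big[b_c(\mathbf{x}_c)+\sum_{\hat s\in\mathcal{S}(c)\setminus\{c\}}b_{\hat s}(\mathbf{x}_{\hat s})\Big]\quad\forall s\in\mathcal{S}(c)\setminus\{c\},\ \mathbf{x}_s,$$ $$b^*_c(\mathbf{x}_c)=b_c(\mathbf{x}_c)+\sum_{\hat s\in\mathcal{S}(c)\setminus\{c\}}b_{\hat s}(\mathbf{x}_{\hat s})-\sum_{\hat s\in\mathcal{S}(c)\setminus\{c\}}b^*_{\hat s}(\mathbf{x}_{\hat s})\quad\forall\mathbf{x}_c.$$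
   Context: Let $\mathcal{V}=\{1,\dots,n\}$; each variable $x_i$ takes values in a finite set, $\mathbf{x}_s=(x_i)_{i\in s}$ for $s\subseteq\mathcal{V}$. Let $\mathcal{C}$ be a collection of subsets of $\mathcal{V}$ with real potentials $\theta_c(\mathbf{x}_c)$. Let $\mathcal{C}'$ be a collection of subsets of $\mathcal{V}$ and for each $c\in\mathcal{C}'$ let $\mathcal{S}(c)$ be a collection of subsets of $c$ (possibly containing $c$), with $\mathcal{C}'\cup\bigcup_c\mathcal{S}(c)\supseteq\mathcal{C}$; put $\mathcal{T}=\mathcal{C}'\cup\bigcup_{c\in\mathcal{C}'}\mathcal{S}(c)$. Messages are reals $\lambda_{c\to s}(\mathbf{x}_s)$, $c\in\mathcal{C}'$, $s\in\mathcal{S}(c)\setminus\{c\}$. For $t\in\mathcal{T}$: $\hat\theta_t=\mathbb{1}(t\in\mathcal{C})\theta_t$; $\gamma_t(\mathbf{x}_t)=\mathbb{1}(t\in\mathcal{C}')\sum_{\hat s\in\mathcal{S}(t)\setminus\{t\}}\lambda_{t\to\hat s}(\mathbf{x}_{\hat s})$; $\lambda_t(\mathbf{x}_t)=\sum_{c'\in\mathcal{C}':\,t\in\mathcal{S}(c')\setminus\{c'\}}\lambda_{c'\to t}(\mathbf{x}_t)$; beliefs $b_t=\hat\theta_t+\lambda_t-\gamma_t$. For $s\in\mathcal{S}(c)\setminus\{c\}$, $\lambda_s^{-c}(\mathbf{x}_s)=\sum_{\hat c\in\mathcal{C}':\,\hat c\ne c,\ s\in\mathcal{S}(\hat c)\setminus\{\hat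 c\}}\lambda_{\hat c\to s}(\mathbf{x}_s)$ (these and $\lambda_c,\gamma_s$ do not depend on the block). The updated block is $\lambda^*_{c\to s}(\mathbf{x}_s)=-\hat\theta_s(\mathbf{x}_s)+\gamma_s(\mathbf{x}_s)-\lambda_s^{-c}(\mathbf{x}_s)+\frac{1}{|\mathcal{S}(c)\setminus\{c\}|}\max_{\mathbf{x}_{c\setminus s}}[\hat\theta_c(\mathbf{x}_c)+\lambda_c(\mathbf{x}_c)+\sum_{\hat s\in\mathcal{S}(c)\setminus\{c\}}(\hat\theta_{\hat s}-\gamma_{\hat s}+\lambda^{-c}_{\hat s})(\mathbf{x}_{\hat s})]$. *)

theory Defs
  imports Complex_Main "HOL-Library.FuncSet"
begin

text \<open>Variables are indexed by naturals; D i is the finite value set of variable i.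
Partial assignments x_s are extensional functions in PiE s D; x_s of a larger
assignment y is restrict y s.\<close>

definition thetahat :: "nat set set \<Rightarrow> (nat set \<Rightarrow> (nat \<Rightarrow> 'a) \<Rightarrow> real) \<Rightarrow> nat set \<Rightarrow> (nat \<Rightarrow> 'a) \<Rightarrow> real" where
  "thetahat C \<theta> t x = (if t \<in> C then \<theta> t x else 0)"

definition gam :: "nat set set \<Rightarrow> (nat set \<Rightarrow> nat set set) \<Rightarrow> (nat set \<Rightarrow> nat set \<Rightarrow> (nat \<Rightarrow> 'a) \<Rightarrow> real)
    \<Rightarrow> nat set \<Rightarrow> (nat \<Rightarrow> 'a) \<Rightarrow> real" where
  "gam C' S lam t x = (if t \<in> C' then (\<Sum>s\<in>S t - {t}. lam t s (restrict x s)) else 0)"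

definition lamin :: "nat set set \<Rightarrow> (nat set \<Rightarrow> nat set set) \<Rightarrow> (nat set \<Rightarrow> nat set \<Rightarrow> (nat \<Rightarrow> 'a) \<Rightarrow> real)
    \<Rightarrow> nat set \<Rightarrow> (nat \<Rightarrow> 'a) \<Rightarrow> real" where
  "lamin C' S lam t x = (\<Sum>c'\<in>{c'\<in>C'. t \<in> S c' - {c'}}. lam c' t x)"

definition lamminus :: "nat set set \<Rightarrow> (nat set \<Rightarrow> nat set set) \<Rightarrow> (nat set \<Rightarrow> nat set \<Rightarrow> (nat \<Rightarrow> 'a) \<Rightarrow> real)
    \<Rightarrow> nat set \<Rightarrow> nat set \<Rightarrow> (nat \<Rightarrow> 'a) \<Rightarrow> real" where
  "lamminus C' S lam c s x = (\<Sum>c'\<in>{c'\<in>C'. c' \<noteq> c \<and> s \<in> S c' - {c'}}. lam c' s x)"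

definition belief :: "nat set set \<Rightarrow> (nat set \<Rightarrow> (nat \<Rightarrow> 'a) \<Rightarrow> real) \<Rightarrow> nat set set \<Rightarrow> (nat set \<Rightarrow> nat set set)
    \<Rightarrow> (nat set \<Rightarrow> nat set \<Rightarrow> (nat \<Rightarrow> 'a) \<Rightarrow> real) \<Rightarrow> nat set \<Rightarrow> (nat \<Rightarrow> 'a) \<Rightarrow> real" where
  "belief C \<theta> C' S lam t x = thetahat C \<theta> t x + lamin C' S lam t x - gam C' S lam t x"

definition maxext :: "(nat \<Rightarrow> 'a set) \<Rightarrow> nat set \<Rightarrow> nat set \<Rightarrow> ((nat \<Rightarrow> 'a) \<Rightarrow> real) \<Rightarrow> (nat \<Rightarrow> 'a) \<Rightarrow> real" where
  "maxext D c s F xs = Max {F y | y. y \<in> PiE c D \<and> restrict y s = xs}"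

definition lamstar :: "(nat \<Rightarrow> 'a set) \<Rightarrow> nat set set \<Rightarrow> (nat set \<Rightarrow> (nat \<Rightarrow> 'a) \<Rightarrow> real) \<Rightarrow> nat set set
    \<Rightarrow> (nat set \<Rightarrow> nat set set) \<Rightarrow> (nat set \<Rightarrow> nat set \<Rightarrow> (nat \<Rightarrow> 'a) \<Rightarrow> real)
    \<Rightarrow> nat set \<Rightarrow> nat set \<Rightarrow> (nat \<Rightarrow> 'a) \<Rightarrow> real" where
  "lamstar D C \<theta> C' S lam c s xs =
     - thetahat C \<theta> s xs + gam C' S lam s xs - lamminus C' S lam c s xs
     + (1 / real (card (S c - {c}))) *
       maxext D c s (\<lambda>y. thetahat C \<theta> c y + lamin C' S lam c y
          + (\<Sum>s'\<in>S c - {c}. thetahat C \<theta> s' (restrict y s') - gam C' S lam s' (restrict y s')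
                               + lamminus C' S lam c s' (restrict y s'))) xs"

definition updblock :: "(nat \<Rightarrow> 'a set) \<Rightarrow> nat set set \<Rightarrow> (nat set \<Rightarrow> (nat \<Rightarrow> 'a) \<Rightarrow> real) \<Rightarrow> nat set set
    \<Rightarrow> (nat set \<Rightarrow> nat set set) \<Rightarrow> (nat set \<Rightarrow> nat set \<Rightarrow> (nat \<Rightarrow> 'a) \<Rightarrow> real)
    \<Rightarrow> nat set \<Rightarrow> nat set \<Rightarrow> nat set \<Rightarrow> (nat \<Rightarrow> 'a) \<Rightarrow> real" where
  "updblock D C \<theta> C' S lam c = (\<lambda>c0 s. if c0 = c \<and> s \<in> S c - {c} then lamstar D C \<theta> C' S lam c s else lam c0 s)"

end

theory Submission
  imports Defs
begin

lemma split_lamin: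
  fixes S :: "nat set \<Rightarrow> nat set set"
  assumes fin: "finite C'" and cC: "c \<in> C'" and s: "s \<in> S c - {c}"
  shows "lamin C' S L s x = L c s x + lamminus C' S L c s x"
proof -
  have e: "{c'\<in>C'. s \<in> S c' - {c'}} = insert c {c'\<in>C'. c' \<noteq> c \<and> s \<in> S c' - {c'}}"
    using cC s by auto
  show ?thesis unfolding lamin_def lamminus_def e
    by (subst sum.insert) (use fin in auto)
qed

theorem proposition6:
  fixes n :: nat and D :: "nat \<Rightarrow> 'a set"
    and C C' :: "nat set set" and \<theta> :: "nat set \<Rightarrow> (nat \<Rightarrow> 'a) \<Rightarrow> real"
    and S :: "nat set \<Rightarrow> nat set set"
    and lam :: "nat set \<Rightarrow> nat set \<Rightarrow> (nat \<Rightarrow> 'a) \<Rightarrow> real"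
    and c :: "nat set"
  assumes dom: "\<forall>i\<in>{1..n}. finite (D i) \<and> D i \<noteq> {}"
    and C_sub: "\<forall>t\<in>C. t \<subseteq> {1..n}"
    and C'_sub: "\<forall>t\<in>C'. t \<subseteq> {1..n}"
    and S_sub: "\<forall>t\<in>C'. \<forall>s\<in>S t. s \<subseteq> t"
    and cover: "C \<subseteq> C' \<union> (\<Union>t\<in>C'. S t)"
    and c_in: "c \<in> C'"
    and ne: "S c - {c} \<noteq> {}"
  shows "(\<forall>s\<in>S c - {c}. \<forall>xs\<in>PiE s D.
            belief C \<theta> C' S (updblock D C \<theta> C' S lam c) s xs =
              (1 / real (card (S c - {c}))) *
              maxext D c s (\<lambda>y. belief C \<theta> C' S lam c y
                 + (\<Sum>s'\<in>S c - {c}. belief C \<theta> C' S lam s' (restrict y s'))) xs)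
       \<and> (\<forall>xc\<in>PiE c D.
            belief C \<theta> C' S (updblock D C \<theta> C' S lam c) c xc =
              belief C \<theta> C' S lam c xc
              + (\<Sum>s'\<in>S c - {c}. belief C \<theta> C' S lam s' (restrict xc s'))
              - (\<Sum>s'\<in>S c - {c}. belief C \<theta> C' S (updblock D C \<theta> C' S lam c) s' (restrict xc s')))"
  
proof -
  let ?L = "updblock D C \<theta> C' S lam c"
  let ?k = "card (S c - {c})"
  have finC': "finite C'"
    by (rule finite_subset[of _ "Pow {1..n}"]) (use C'_sub in auto)
  have Sc_sub: "S c \<subseteq> Pow {1..n}" using S_sub C'_sub c_in by blast
  have finS: "finite (S c - {c})"
    by (rule finite_subset[of _ "Pow {1..n}"]) (use Sc_sub in auto)
  have Lc: "\<And>s. s \<in> S c - {c} \<Longrightarrow> ?L c s = lamstar D C \<theta> C' S lam c s"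
    unfolding updblock_def by auto
  have Lo: "\<And>c0 s. c0 \<noteq> c \<Longrightarrow> ?L c0 s = lam c0 s"
    unfolding updblock_def by auto
  have Lcc: "\<And>c0. ?L c0 c = lam c0 c"
    unfolding updblock_def by auto
  have gam_o: "\<And>t x. t \<noteq> c \<Longrightarrow> gam C' S ?L t x = gam C' S lam t x"
    unfolding gam_def using Lo by simp
  have gam_c: "\<And>x. gam C' S ?L c x = (\<Sum>s\<in>S c - {c}. lamstar D C \<theta> C' S lam c s (restrict x s))"
    unfolding gam_def using c_in Lc by (auto intro: sum.cong)
  have gam_c0: "\<And>x. gam C' S lam c x = (\<Sum>s\<in>S c - {c}. lam c s (restrict x s))"
    unfolding gam_def using c_in by auto
  have lamin_c: "\<And>x. lamin C' S ?L c x = lamin C' S lam c x"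
    unfolding lamin_def using Lcc by simp
  have lm: "\<And>s x. lamminus C' S ?L c s x = lamminus C' S lam c s x"
    unfolding lamminus_def using Lo by (auto intro: sum.cong)
  have bs_new: "\<And>s x. s \<in> S c - {c} \<Longrightarrow> belief C \<theta> C' S ?L s x =
      thetahat C \<theta> s x + lamstar D C \<theta> C' S lam c s x + lamminus C' S lam c s x - gam C' S lam s x"
  proof -
    fix s x assume s: "s \<in> S c - {c}"
    hence ne': "s \<noteq> c" by blast
    show "belief C \<theta> C' S ?L s x =
      thetahat C \<theta> s x + lamstar D C \<theta> C' S lam c s x + lamminus C' S lam c s x - gam C' S lam s x"
      unfolding belief_def split_lamin[of C' c s S, OF finC' c_in s] Lc[OF s] lm gam_o[OF ne'] by simp
  qed
  have bs_old: "\<And>s x. s \<in> S c - {c} \<Longrightarrow> belief C \<theta> C' S lam s x =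
      thetahat C \<theta> s x + lam c s x + lamminus C' S lam c s x - gam C' S lam s x"
    unfolding belief_def using split_lamin[of C' c _ S, OF finC' c_in] by simp
  have F: "(\<lambda>y. belief C \<theta> C' S lam c y
                 + (\<Sum>s'\<in>S c - {c}. belief C \<theta> C' S lam s' (restrict y s'))) =
     (\<lambda>y. thetahat C \<theta> c y + lamin C' S lam c y
          + (\<Sum>s'\<in>S c - {c}. thetahat C \<theta> s' (restrict y s') - gam C' S lam s' (restrict y s')
                               + lamminus C' S lam c s' (restrict y s')))"
  proof
    fix y
    have "(\<Sum>s'\<in>S c - {c}. belief C \<theta> C' S lam s' (restrict y s')) =
      (\<Sum>s'\<in>S c - {c}. lam c s' (restrict y s') + (thetahat C \<theta> s' (restrict y s') - gam C' S lam s' (restrict y s')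
                               + lamminus C' S lam c s' (restrict y s')))"
      by (rule sum.cong) (auto simp: bs_old)
    also have "\<dots> = (\<Sum>s'\<in>S c - {c}. lam c s' (restrict y s')) + (\<Sum>s'\<in>S c - {c}. thetahat C \<theta> s' (restrict y s') - gam C' S lam s' (restrict y s')
                               + lamminus C' S lam c s' (restrict y s'))"
      by (rule sum.distrib)
    finally show "belief C \<theta> C' S lam c y
                 + (\<Sum>s'\<in>S c - {c}. belief C \<theta> C' S lam s' (restrict y s')) =
      thetahat C \<theta> c y + lamin C' S lam c y
          + (\<Sum>s'\<in>S c - {c}. thetahat C \<theta> s' (restrict y s') - gam C' S lam s' (restrict y s')
                               + lamminus C' S lam c s' (restrict y s'))"
      unfolding belief_def[of C \<theta> C' S lam c] gam_c0 by simp
  qed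
  have P1: "\<forall>s\<in>S c - {c}. \<forall>xs\<in>PiE s D.
            belief C \<theta> C' S ?L s xs =
              (1 / real ?k) *
              maxext D c s (\<lambda>y. belief C \<theta> C' S lam c y
                 + (\<Sum>s'\<in>S c - {c}. belief C \<theta> C' S lam s' (restrict y s'))) xs"
    unfolding F using bs_new by (auto simp: lamstar_def)
  have P2: "\<forall>xc\<in>PiE c D.
            belief C \<theta> C' S ?L c xc =
              belief C \<theta> C' S lam c xc
              + (\<Sum>s'\<in>S c - {c}. belief C \<theta> C' S lam s' (restrict xc s'))
              - (\<Sum>s'\<in>S c - {c}. belief C \<theta> C' S ?L s' (restrict xc s'))"
  proof
    fix xc
    have "(\<Sum>s'\<in>S c - {c}. belief C \<theta> C' S lam s' (restrict xc s')) -
          (\<Sum>s'\<in>S c - {c}. belief C \<theta> C' S ?L s' (restrict xc s')) =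
          (\<Sum>s'\<in>S c - {c}. belief C \<theta> C' S lam s' (restrict xc s') - belief C \<theta> C' S ?L s' (restrict xc s'))"
      by (simp add: sum_subtractf)
    also have "\<dots> = (\<Sum>s'\<in>S c - {c}. lam c s' (restrict xc s') - lamstar D C \<theta> C' S lam c s' (restrict xc s'))"
      by (rule sum.cong) (auto simp: bs_old bs_new)
    also have "\<dots> = (\<Sum>s'\<in>S c - {c}. lam c s' (restrict xc s')) - (\<Sum>s'\<in>S c - {c}. lamstar D C \<theta> C' S lam c s' (restrict xc s'))"
      by (simp add: sum_subtractf)
    finally show "belief C \<theta> C' S ?L c xc =
              belief C \<theta> C' S lam c xc
              + (\<Sum>s'\<in>S c - {c}. belief C \<theta> C' S lam s' (restrict xc s'))
              - (\<Sum>s'\<in>S c - {c}. belief C \<theta> C' S ?L s' (restrict xc s'))"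
      unfolding belief_def[of C \<theta> C' S _ c] gam_c gam_c0 lamin_c by simp
  qed
  show ?thesis using P1 P2 by blast
qed

end
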